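(* Consider the setting in the context, with strike $K\in(0,\infty)$. Let $\bar w=W\left(s_0e^{(\delta-\frac{\eta^2}{2})T}\eta^2T\lambda\gamma(1-\rho^2)\right)$ and suppose $$K\ge\frac1{\lambda\gamma(1-\rho^2)}\left(\frac{\bar w}{\eta^2T}+\frac{\bar w^2}{2\eta^2T}\right).$$ Then $p^{put}=D^{put}+A^{put}$, where $$D^{put}=\lambda e^{-rT}K-\frac{e^{-rT}}{\gamma(1-\rho^2)}\left(\frac{\bar w}{\eta^2T}+\frac{\bar w^2}{2\eta^2T}\right),\qquad A^{put}=\frac{e^{-rT}}{\gamma(1-\rho^2)}\ln\mathbb E(\psi_K(N)),$$ $$\psi_K(y)=\exp\left(-\frac{\bar w}{\eta^2T}\left(e^{\eta\sqrt Ty}-1-\eta\sqrt Ty\right)+\left(\frac{\bar w}{\eta^2T}e^{\eta\sqrt Ty}-\lambda\gamma(1-\rho^2)K\right)_+\right).$$ Moreover $V^{put}(x_0,s_0,\lambda,K)=V^{put}_D(x_0,s_0,\lambda,K)\,V^{put}_A(s_0,\lambda,K)$, where $$V^{put}_D(x_0,s_0,\lambda,K)=-\frac1\gamma\exp\left(-\gamma e^{rT}(x_0-D^{put})-\frac{(\mu-r)^2}{2\sigma^2}T\right),\qquad V^{put}_A(s_0,\lambda,K)=\exp\left(\gamma e^{rT}A^{put}\right).$$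
   Context: Fix $T>0$, $r,\nu,\mu,x_0\in\mathbb R$, $\eta>0$, $\sigma>0$, $\rho\in(-1,1)$, $s_0>0$, $\lambda>0$, $\gamma>0$; $N$ is a standard Gaussian random variable; $\delta=\nu-\eta\rho\frac{\mu-r}{\sigma}$; $W$ is the Lambert function (inverse of $x\in(-1,\infty)\mapsto xe^x$); $x_+=\max(x,0)$. (Model: non-traded asset $dS=S(\nu dt+\eta dZ)$, traded asset $dP=P(\mu dt+\sigma dB)$, correlation $\rho$, bond rate $r$, utility $-\frac1\gamma e^{-\gamma x}$; the agent is short $\lambda$ put options with payoff $(K-S_T)_+$.) The selling reservation price and the value function of this short put position are $$p^{put}=\frac{e^{-rT}}{\gamma(1-\rho^2)}\ln\mathbb E\exp\left(\lambda\gamma(1-\rho^2)\left(K-s_0e^{(\delta-\frac{\eta^2}{2})T}e^{\eta\sqrt TN}\right)_+\right),$$ $$V^{put}(x_0,s_0,\lambda,K)=-\frac1\gamma e^{-\gamma x_0e^{rT}-\frac{(\mu-r)^2}{2\sigma^2}T}\left(\mathbb E\exp\left(\lambda\gamma(1-\rho^2)\left(K-s_0e^{(\delta-\frac{\eta^2}{2})T}e^{\eta\sqrt TN}\right)_+\right)\right)^{\frac1{1-\rho^2}}.$$ *)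

theory Defs
  imports "HOL-Probability.Probability"
begin

definition lambertW :: "real \<Rightarrow> real" where
  "lambertW z = (THE w. w > -1 \<and> w * exp w = z)"

definition EN :: "(real \<Rightarrow> real) \<Rightarrow> real" where
  "EN f = integral\<^sup>L (density lborel std_normal_density) f"

definition pos_part :: "real \<Rightarrow> real" where
  "pos_part x = max x 0"

definition delta_par :: "real \<Rightarrow> real \<Rightarrow> real \<Rightarrow> real \<Rightarrow> real \<Rightarrow> real \<Rightarrow> real" where
  "delta_par \<nu> \<eta> \<rho> \<mu> r \<sigma> = \<nu> - \<eta> * \<rho> * (\<mu> - r) / \<sigma>"

definition p_put :: "real \<Rightarrow> real \<Rightarrow> real \<Rightarrow> real \<Rightarrow> real \<Rightarrow> real \<Rightarrow> real \<Rightarrow> real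
    \<Rightarrow> real \<Rightarrow> real \<Rightarrow> real \<Rightarrow> real" where
  "p_put T r \<nu> \<mu> \<eta> \<sigma> \<rho> \<gamma> s0 lam K =
     exp (- r * T) / (\<gamma> * (1 - \<rho>\<^sup>2)) *
     ln (EN (\<lambda>y. exp (lam * \<gamma> * (1 - \<rho>\<^sup>2) *
        pos_part (K - s0 * exp ((delta_par \<nu> \<eta> \<rho> \<mu> r \<sigma> - \<eta>\<^sup>2 / 2) * T) * exp (\<eta> * sqrt T * y)))))"

definition V_put :: "real \<Rightarrow> real \<Rightarrow> real \<Rightarrow> real \<Rightarrow> real \<Rightarrow> real \<Rightarrow> real \<Rightarrow> real
    \<Rightarrow> real \<Rightarrow> real \<Rightarrow> real \<Rightarrow> real \<Rightarrow> real" where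
  "V_put T r \<nu> \<mu> \<eta> \<sigma> \<rho> \<gamma> x0 s0 lam K =
     - (1 / \<gamma>) * exp (- \<gamma> * x0 * exp (r * T) - (\<mu> - r)\<^sup>2 / (2 * \<sigma>\<^sup>2) * T) *
     (EN (\<lambda>y. exp (lam * \<gamma> * (1 - \<rho>\<^sup>2) *
        pos_part (K - s0 * exp ((delta_par \<nu> \<eta> \<rho> \<mu> r \<sigma> - \<eta>\<^sup>2 / 2) * T) * exp (\<eta> * sqrt T * y)))))
       powr (1 / (1 - \<rho>\<^sup>2))"

end

theory Submission
  imports Defs
begin

lemma xexp_mono: "0 < x \<Longrightarrow> x < y \<Longrightarrow> x * exp x < y * exp (y::real)"
  by (meson exp_gt_zero exp_less_mono less_trans mult_strict_mono order_less_imp_le)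

lemma lambertW_prop:
  fixes z :: real assumes z: "z > 0"
  shows "lambertW z * exp (lambertW z) = z"
proof -
  have ex: "\<exists>w. 0 \<le> w \<and> w \<le> z \<and> w * exp w = z"
  proof (rule IVT)
    show "0 * exp 0 \<le> z" using z by simp
    show "z \<le> z * exp z" using z by simp
    show "0 \<le> z" using z by simp
    show "\<forall>x. 0 \<le> x \<and> x \<le> z \<longrightarrow> isCont (\<lambda>w. w * exp w) x" by (intro allI impI continuous_intros)
  qed
  then obtain w where w: "w * exp w = z" "w \<ge> 0" by blast
  have pos: "u > 0" if "u > -1" "u * exp u = z" for u :: real
  proof (rule ccontr)
    assume "\<not> u > 0"
    then have "u * exp u \<le> 0" by (simp add: mult_nonpos_nonneg)
    with that z show False by simp
  qed
  have uniq: "u = w" if "u > -1" "u * exp u = z" for u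
  proof -
    have "u > 0" using pos that by blast
    moreover have "w > 0" using pos w by force
    ultimately show ?thesis using xexp_mono[of u w] xexp_mono[of w u] that w
      by (metis linorder_neqE_linordered_idom order_less_irrefl)
  qed
  have "w > -1" using w by simp
  then have "(THE u. u > -1 \<and> u * exp u = z) = w"
    using uniq w by (intro the_equality) auto
  then show ?thesis unfolding lambertW_def using w by simp
qed

theorem theorem5:
  fixes T r \<nu> \<mu> x0 \<eta> \<sigma> \<rho> s0 lam \<gamma> K :: real
  assumes "T > 0" and "\<eta> > 0" and "\<sigma> > 0" and "-1 < \<rho>" and "\<rho> < 1"
    and "s0 > 0" and "lam > 0" and "\<gamma> > 0" and "K > 0"
  defines "wbar \<equiv> lambertW (s0 * exp ((delta_par \<nu> \<eta> \<rho> \<mu> r \<sigma> - \<eta>\<^sup>2 / 2) * T)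
                              * \<eta>\<^sup>2 * T * lam * \<gamma> * (1 - \<rho>\<^sup>2))"
  defines "Dput \<equiv> lam * exp (- r * T) * K - exp (- r * T) / (\<gamma> * (1 - \<rho>\<^sup>2)) *
                   (wbar / (\<eta>\<^sup>2 * T) + wbar\<^sup>2 / (2 * \<eta>\<^sup>2 * T))"
  defines "\<psi> \<equiv> (\<lambda>y. exp (- (wbar / (\<eta>\<^sup>2 * T)) * (exp (\<eta> * sqrt T * y) - 1 - \<eta> * sqrt T * y)
                  + pos_part (wbar / (\<eta>\<^sup>2 * T) * exp (\<eta> * sqrt T * y) - lam * \<gamma> * (1 - \<rho>\<^sup>2) * K)))"
  defines "Aput \<equiv> exp (- r * T) / (\<gamma> * (1 - \<rho>\<^sup>2)) * ln (EN \<psi>)"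
  defines "VD \<equiv> - (1 / \<gamma>) * exp (- \<gamma> * exp (r * T) * (x0 - Dput) - (\<mu> - r)\<^sup>2 / (2 * \<sigma>\<^sup>2) * T)"
  defines "VA \<equiv> exp (\<gamma> * exp (r * T) * Aput)"
  assumes "K \<ge> 1 / (lam * \<gamma> * (1 - \<rho>\<^sup>2)) * (wbar / (\<eta>\<^sup>2 * T) + wbar\<^sup>2 / (2 * \<eta>\<^sup>2 * T))"
  shows "p_put T r \<nu> \<mu> \<eta> \<sigma> \<rho> \<gamma> s0 lam K = Dput + Aput
     \<and> V_put T r \<nu> \<mu> \<eta> \<sigma> \<rho> \<gamma> x0 s0 lam K = VD * VA"
proof -
  define a where "a = lam * \<gamma> * (1 - \<rho>\<^sup>2)"
  define c where "c = s0 * exp ((delta_par \<nu> \<eta> \<rho> \<mu> r \<sigma> - \<eta>\<^sup>2 / 2) * T)"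
  define v where "v = \<eta> * sqrt T"
  define w where "w = wbar"
  define q where "q = w / (\<eta>\<^sup>2 * T)"
  define B where "B = wbar / (\<eta>\<^sup>2 * T) + wbar\<^sup>2 / (2 * \<eta>\<^sup>2 * T)"
  define m where "m = w / v"
  define F where "F = (\<lambda>y. exp (a * pos_part (K - c * exp (v * y))))"
  have "\<bar>\<rho>\<bar> < 1" using assms(4,5) by auto
  then have rho2: "1 - \<rho>\<^sup>2 > 0" by (simp add: abs_square_less_1)
  have apos: "a > 0" unfolding a_def using rho2 assms by simp
  have cpos: "c > 0" unfolding c_def using assms by simp
  have vpos: "v > 0" unfolding v_def using assms by simp
  have v2: "v\<^sup>2 = \<eta>\<^sup>2 * T" unfolding v_def using assms by (simp add: power_mult_distrib)
  have v2': "2 * \<eta>\<^sup>2 * T = 2 * v\<^sup>2" using v2 by simp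
  have wprop: "w * exp w = c * v\<^sup>2 * a"
    unfolding w_def wbar_def v2 a_def c_def
    by (rule lambertW_prop[THEN trans]) (use rho2 assms in \<open>simp_all add: mult.assoc\<close>)
  have aceq: "a * c * exp (- w) = q"
    using wprop vpos unfolding q_def v2[symmetric] by (simp add: exp_minus field_simps)
  have pw: "std_normal_density (-m + 1 * z) * F (-m + 1 * z) = exp (a * K - B) * (std_normal_density z * \<psi> z)" for z
  proof -
    have e1: "c * exp (v * (-m + 1 * z)) = c * exp (- w) * exp (v * z)"
    proof -
      have "v * (-m + 1 * z) = - w + v * z" using vpos unfolding m_def by (simp add: field_simps)
      then show ?thesis by (simp add: exp_add[symmetric])
    qed
    have pp: "a * pos_part (K - c * exp (v * (-m + 1 * z))) = a * K - q * exp (v * z) + pos_part (q * exp (v * z) - a * K)"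
      unfolding e1 aceq[symmetric] pos_part_def using apos
      by (auto simp: max_def algebra_simps mult_le_cancel_left_pos)
    have ex: "- (-m + 1 * z)\<^sup>2 / 2 + (a * K - q * exp (v * z) + pos_part (q * exp (v * z) - a * K))
        = a * K - B + (- z\<^sup>2 / 2 + (- q * (exp (v * z) - 1 - v * z) + pos_part (q * exp (v * z) - a * K)))"
      unfolding B_def q_def m_def w_def v2' v2[symmetric] using vpos
      by (simp add: field_simps power2_eq_square)
    show ?thesis
      unfolding F_def std_normal_density_def pp \<psi>_def
      using ex[folded v_def] unfolding q_def[symmetric] a_def[symmetric] v_def[symmetric] w_def[symmetric]
      by (simp add: exp_add[symmetric] algebra_simps)
  qed
  have Fm: "F \<in> borel_measurable lborel" unfolding F_def pos_part_def by measurable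
  have psim: "\<psi> \<in> borel_measurable lborel" unfolding \<psi>_def pos_part_def by measurable
  have Fb: "F \<in> borel_measurable borel" unfolding F_def pos_part_def by measurable
  have psib: "\<psi> \<in> borel_measurable borel" unfolding \<psi>_def pos_part_def by measurable
  have ENF: "EN F = (\<integral>x. std_normal_density x * F x \<partial>lborel)"
    unfolding EN_def by (subst integral_density) (auto simp: Fb)
  have ENpsi: "EN \<psi> = (\<integral>x. std_normal_density x * \<psi> x \<partial>lborel)"
    unfolding EN_def by (subst integral_density) (auto simp: psib)
  have shift: "EN F = exp (a * K - B) * EN \<psi>"
  proof -
    have "EN F = \<bar>1\<bar> *\<^sub>R (\<integral>x. std_normal_density (-m + 1 * x) * F (-m + 1 * x) \<partial>lborel)"
      unfolding ENF by (rule lborel_integral_real_affine) simp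
    also have "\<dots> = (\<integral>x. exp (a * K - B) * (std_normal_density x * \<psi> x) \<partial>lborel)"
      by (simp only: pw) simp
    also have "\<dots> = exp (a * K - B) * EN \<psi>" unfolding ENpsi by simp
    finally show ?thesis .
  qed
  have Fbd: "1 \<le> F x \<and> F x \<le> exp (a * K)" for x
  proof -
    have "0 \<le> pos_part (K - c * exp (v * x))" "pos_part (K - c * exp (v * x)) \<le> K"
      unfolding pos_part_def using cpos assms(9) by auto
    then have "0 \<le> a * pos_part (K - c * exp (v * x))" "a * pos_part (K - c * exp (v * x)) \<le> a * K"
      using apos by (auto intro: mult_left_mono)
    then show ?thesis unfolding F_def by auto
  qed
  have intF: "integrable lborel (\<lambda>x. std_normal_density x * F x)"
  proof (rule Bochner_Integration.integrable_bound[where f="\<lambda>x. exp (a * K) * std_normal_density x"])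
    show "integrable lborel (\<lambda>x. exp (a * K) * std_normal_density x)" by simp
    show "(\<lambda>x. std_normal_density x * F x) \<in> borel_measurable lborel" using Fm by measurable
    show "AE x in lborel. norm (std_normal_density x * F x) \<le> norm (exp (a * K) * std_normal_density x)"
    proof (intro AE_I2)
      fix x
      have "\<bar>F x\<bar> \<le> exp (a * K)" using Fbd[of x] by auto
      then have "std_normal_density x * \<bar>F x\<bar> \<le> std_normal_density x * exp (a * K)"
        by (intro mult_left_mono) auto
      then show "norm (std_normal_density x * F x) \<le> norm (exp (a * K) * std_normal_density x)"
        by (simp add: abs_mult mult.commute)
    qed
  qed
  have ENF1: "EN F \<ge> 1"
  proof -
    have "1 = (\<integral>x. std_normal_density x \<partial>lborel)" by simp
    also have "\<dots> \<le> (\<integral>x. std_normal_density x * F x \<partial>lborel)"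
    proof (intro integral_mono intF)
      fix x
      have "std_normal_density x * 1 \<le> std_normal_density x * F x"
        using Fbd[of x] by (intro mult_left_mono) auto
      then show "std_normal_density x \<le> std_normal_density x * F x" by simp
    qed simp
    finally show ?thesis unfolding ENF .
  qed
  have Lpos: "EN \<psi> > 0"
  proof -
    have "exp (a * K - B) * EN \<psi> > 0" using ENF1 shift by simp
    then show ?thesis by (simp add: zero_less_mult_iff)
  qed
  have lnF: "ln (EN F) = a * K - B + ln (EN \<psi>)"
    unfolding shift using Lpos by (simp add: ln_mult)
  have pp: "p_put T r \<nu> \<mu> \<eta> \<sigma> \<rho> \<gamma> s0 lam K = exp (- r * T) / (\<gamma> * (1 - \<rho>\<^sup>2)) * ln (EN F)"
    unfolding p_put_def F_def a_def c_def v_def by simp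
  have vp: "V_put T r \<nu> \<mu> \<eta> \<sigma> \<rho> \<gamma> x0 s0 lam K = - (1 / \<gamma>) * exp (- \<gamma> * x0 * exp (r * T) - (\<mu> - r)\<^sup>2 / (2 * \<sigma>\<^sup>2) * T) *
     (EN F) powr (1 / (1 - \<rho>\<^sup>2))"
    unfolding V_put_def F_def a_def c_def v_def by simp
  have em: "exp (- r * T) = 1 / exp (r * T)" by (simp add: exp_minus divide_inverse)
  have g0: "\<gamma> \<noteq> 0" using assms by simp
  have r0: "1 - \<rho>\<^sup>2 \<noteq> 0" using rho2 by simp
  have part1: "p_put T r \<nu> \<mu> \<eta> \<sigma> \<rho> \<gamma> s0 lam K = Dput + Aput"
  proof -
    have gen: "\<And>E d L. d \<noteq> 0 \<Longrightarrow> E / (\<gamma> * d) * (lam * \<gamma> * d * K - B + L) = lam * E * K - E / (\<gamma> * d) * B + E / (\<gamma> * d) * L"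
      using g0 by (simp add: field_simps)
    show ?thesis
      unfolding pp lnF Dput_def Aput_def B_def[symmetric] a_def using gen[OF r0] by simp
  qed
  have pw2: "(EN F) powr (1 / (1 - \<rho>\<^sup>2)) = exp ((a * K - B + ln (EN \<psi>)) / (1 - \<rho>\<^sup>2))"
    using ENF1 lnF by (simp add: powr_def)
  have part2: "V_put T r \<nu> \<mu> \<eta> \<sigma> \<rho> \<gamma> x0 s0 lam K = VD * VA"
  proof -
    have "- \<gamma> * x0 * exp (r * T) - (\<mu> - r)\<^sup>2 / (2 * \<sigma>\<^sup>2) * T + (a * K - B + ln (EN \<psi>)) / (1 - \<rho>\<^sup>2)
      = (- \<gamma> * exp (r * T) * (x0 - Dput) - (\<mu> - r)\<^sup>2 / (2 * \<sigma>\<^sup>2) * T) + \<gamma> * exp (r * T) * Aput"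
    proof -
      have gen: "\<And>E d L M. d \<noteq> 0 \<Longrightarrow> E > 0 \<Longrightarrow> - \<gamma> * x0 * E - M + (lam * \<gamma> * d * K - B + L) / d
        = (- \<gamma> * E * (x0 - (lam * (1 / E) * K - (1 / E) / (\<gamma> * d) * B)) - M) + \<gamma> * E * ((1 / E) / (\<gamma> * d) * L)"
        using g0 by (simp add: field_simps)
      show ?thesis unfolding Dput_def Aput_def B_def[symmetric] a_def em
        using gen[OF r0, of "exp (r * T)"] by simp
    qed
    then show ?thesis unfolding vp pw2 VD_def VA_def
      by (simp add: exp_add[symmetric] mult.assoc)
  qed
  show ?thesis using part1 part2 by blast
qed

end
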